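(* Let $G$ be a finite, simple, connected graph and let $C$ be a cycle of length $l \geq 3$ in $G$. Let $W^+(G)$ be the graph obtained from $G$ by adding a new vertex $x$ and joining $x$ by an edge to every vertex of $C$. Then $$\chi_{dd}(G)-l \leq \chi_{dd}(W^+(G)) \leq \chi_{dd}(G) + 1.$$
   Context: All graphs are finite, undirected and simple. For a vertex $w$, $N(w)$ is its open neighborhood and $N[w]=N(w)\cup\{w\}$ its closed neighborhood. A vertex $w$ dominates a set $S$ of vertices if $S \subseteq N[w]$. A domination coloring of a graph $H$ is a proper vertex coloring of $H$ (adjacent vertices receive different colors; a color class is the set of all vertices receiving a given color) such that every vertex of $H$ dominates at least one color class (possibly its own class), and every color class is dominated by at least one vertex of $H$. The domination chromatic number $\chi_{dd}(H)$ is the minimum number of color classes in a domination coloring of $H$. *)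

theory Defs
  imports Main
begin

definition simple_graph :: "'a set \<Rightarrow> 'a set set \<Rightarrow> bool" where
  "simple_graph V E \<longleftrightarrow> finite V \<and> (\<forall>e\<in>E. e \<subseteq> V \<and> card e = 2)"

definition adj :: "'a set set \<Rightarrow> 'a \<Rightarrow> 'a \<Rightarrow> bool" where
  "adj E u v \<longleftrightarrow> {u, v} \<in> E"

definition connected_graph :: "'a set \<Rightarrow> 'a set set \<Rightarrow> bool" where
  "connected_graph V E \<longleftrightarrow> (\<forall>u\<in>V. \<forall>v\<in>V. (adj E)\<^sup>*\<^sup>* u v)"

definition closed_nbhd :: "'a set set \<Rightarrow> 'a \<Rightarrow> 'a set" where
  "closed_nbhd E w = insert w {u. adj E w u}"

definition is_cycle :: "'a set \<Rightarrow> 'a set set \<Rightarrow> 'a list \<Rightarrow> bool" where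
  "is_cycle V E c \<longleftrightarrow> length c \<ge> 3 \<and> distinct c \<and> set c \<subseteq> V \<and>
     (\<forall>i < length c. adj E (c ! i) (c ! ((i + 1) mod length c)))"

definition color_class :: "'a set \<Rightarrow> ('a \<Rightarrow> nat) \<Rightarrow> nat \<Rightarrow> 'a set" where
  "color_class V f k = {v \<in> V. f v = k}"

definition proper_coloring :: "'a set \<Rightarrow> 'a set set \<Rightarrow> ('a \<Rightarrow> nat) \<Rightarrow> bool" where
  "proper_coloring V E f \<longleftrightarrow> (\<forall>u\<in>V. \<forall>v\<in>V. adj E u v \<longrightarrow> f u \<noteq> f v)"

definition dom_coloring :: "'a set \<Rightarrow> 'a set set \<Rightarrow> ('a \<Rightarrow> nat) \<Rightarrow> bool" where
  "dom_coloring V E f \<longleftrightarrow> proper_coloring V E f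
     \<and> (\<forall>w\<in>V. \<exists>k\<in>f ` V. color_class V f k \<subseteq> closed_nbhd E w)
     \<and> (\<forall>k\<in>f ` V. \<exists>w\<in>V. color_class V f k \<subseteq> closed_nbhd E w)"

definition chi_dd :: "'a set \<Rightarrow> 'a set set \<Rightarrow> nat" where
  "chi_dd V E = (LEAST n. \<exists>f. dom_coloring V E f \<and> card (f ` V) = n)"

definition W_plus_V :: "'a set \<Rightarrow> 'a \<Rightarrow> 'a set" where
  "W_plus_V V x = insert x V"

definition W_plus_E :: "'a set set \<Rightarrow> 'a list \<Rightarrow> 'a \<Rightarrow> 'a set set" where
  "W_plus_E E c x = E \<union> {{x, v} | v. v \<in> set c}"

end

theory Submission
  imports Defs
begin

lemma chi_le:
  assumes "dom_coloring V E f"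
  shows "chi_dd V E \<le> card (f ` V)"
  unfolding chi_dd_def using assms by (intro Least_le) blast

lemma chi_ex:
  assumes "finite V" and noloop: "\<And>u. \<not> adj E u u"
  shows "\<exists>f. dom_coloring V E f \<and> card (f ` V) = chi_dd V E"
proof -
  obtain f :: "_ \<Rightarrow> nat" and n where fn: "f ` V = {i. i < n}" "inj_on f V"
    using finite_imp_inj_to_nat_seg[OF assms(1)] by blast
  have cl: "color_class V f (f w) = {w}" if "w \<in> V" for w
    using fn(2) that unfolding color_class_def inj_on_def by blast
  have "dom_coloring V E f"
    unfolding dom_coloring_def proper_coloring_def
  proof (intro conjI ballI impI)
    fix u v assume "u \<in> V" "v \<in> V" "adj E u v"
    then show "f u \<noteq> f v" using fn(2) noloop unfolding inj_on_def by metis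
  next
    fix w assume "w \<in> V"
    then show "\<exists>k\<in>f ` V. color_class V f k \<subseteq> closed_nbhd E w"
      using cl[of w] unfolding closed_nbhd_def by blast
  next
    fix k assume "k \<in> f ` V"
    then obtain w where "w \<in> V" "k = f w" by blast
    then show "\<exists>w\<in>V. color_class V f k \<subseteq> closed_nbhd E w"
      using cl[of w] unfolding closed_nbhd_def by blast
  qed
  then have "\<exists>n f. dom_coloring V E f \<and> card (f ` V) = n" by blast
  then show ?thesis unfolding chi_dd_def by (rule LeastI_ex)
qed

theorem theorem6:
  fixes V :: "'a set" and E :: "'a set set" and c :: "'a list" and x :: 'a
  assumes "simple_graph V E"
    and "connected_graph V E"
    and "is_cycle V E c"
    and "x \<notin> V"
  shows "int (chi_dd V E) - int (length c) \<le> int (chi_dd (W_plus_V V x) (W_plus_E E c x))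
    \<and> chi_dd (W_plus_V V x) (W_plus_E E c x) \<le> chi_dd V E + 1"
proof -
  define VH where "VH = insert x V"
  define EH where "EH = W_plus_E E c x"
  have VHd: "W_plus_V V x = VH" unfolding VH_def W_plus_V_def by simp
  have finV: "finite V" using assms(1) unfolding simple_graph_def by simp
  have finVH: "finite VH" using finV unfolding VH_def by simp
  have cV: "set c \<subseteq> V" using assms(3) unfolding is_cycle_def by simp
  have Esub: "\<And>e. e \<in> E \<Longrightarrow> e \<subseteq> V \<and> card e = 2" using assms(1) unfolding simple_graph_def by blast
  have noloopE: "\<And>u. \<not> adj E u u"
  proof
    fix u assume "adj E u u"
    then have "{u} \<in> E" unfolding adj_def by simp
    then show False using Esub by fastforce
  qed
  have adjH: "\<And>u v. adj EH u v \<longleftrightarrow> adj E u v \<or> (\<exists>w\<in>set c. {u,v} = {x,w})"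
    unfolding EH_def W_plus_E_def adj_def by blast
  have noxE: "\<And>u. \<not> adj E x u \<and> \<not> adj E u x"
  proof -
    fix u
    have "\<not> {x, u} \<in> E"
    proof
      assume "{x, u} \<in> E"
      then have "{x, u} \<subseteq> V" using Esub by blast
      then show False using assms(4) by simp
    qed
    moreover have "{u, x} = {x, u}" by (rule insert_commute)
    ultimately show "\<not> adj E x u \<and> \<not> adj E u x" unfolding adj_def by simp
  qed
  have noloopH: "\<And>u. \<not> adj EH u u"
  proof
    fix u assume "adj EH u u"
    then have "adj E u u \<or> (\<exists>w\<in>set c. {u} = {x,w})" using adjH by simp
    moreover have "\<not> (\<exists>w\<in>set c. {u} = {x,w})"
    proof
      assume "\<exists>w\<in>set c. {u} = {x,w}"
      then obtain w where "w \<in> set c" "{u} = {x,w}" by blast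
      then have "x \<in> set c" by (metis insert_iff singletonD)
      then show False using cV assms(4) by blast
    qed
    ultimately show False using noloopE by blast
  qed
  have nbE_H: "\<And>w. closed_nbhd E w \<subseteq> closed_nbhd EH w"
    unfolding closed_nbhd_def using adjH by blast
  have nbH_E: "\<And>w v. w \<in> V \<Longrightarrow> v \<in> V \<Longrightarrow> v \<in> closed_nbhd EH w \<Longrightarrow> v \<in> closed_nbhd E w"
  proof -
    fix w v assume a: "w \<in> V" "v \<in> V" "v \<in> closed_nbhd EH w"
    then have "v = w \<or> adj E w v \<or> (\<exists>u\<in>set c. {w,v} = {x,u})"
      unfolding closed_nbhd_def using adjH by auto
    then show "v \<in> closed_nbhd E w" unfolding closed_nbhd_def using a assms(4)
      by (metis doubleton_eq_iff insert_iff mem_Collect_eq)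
  qed
  have nbx: "closed_nbhd EH x \<subseteq> insert x (set c)"
  proof
    fix v assume "v \<in> closed_nbhd EH x"
    then have "v = x \<or> adj E x v \<or> (\<exists>u\<in>set c. {x,v} = {x,u})"
      unfolding closed_nbhd_def using adjH by auto
    then show "v \<in> insert x (set c)" using noxE by (metis doubleton_eq_iff insert_iff)
  qed
  have xnb: "\<And>w. w \<in> V \<Longrightarrow> w \<notin> set c \<Longrightarrow> x \<notin> closed_nbhd EH w"
  proof
    fix w assume a: "w \<in> V" "w \<notin> set c" "x \<in> closed_nbhd EH w"
    then have "x = w \<or> adj E w x \<or> (\<exists>u\<in>set c. {w,x} = {x,u})"
      unfolding closed_nbhd_def using adjH by auto
    then show False using a noxE assms(4) by (metis doubleton_eq_iff)
  qed
  have upper: "chi_dd VH EH \<le> chi_dd V E + 1"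
  proof -
    obtain f where f: "dom_coloring V E f" "card (f ` V) = chi_dd V E"
      using chi_ex[OF finV noloopE] by blast
    define N where "N = Suc (Max (f ` V))"
    have fN: "\<And>v. v \<in> V \<Longrightarrow> f v < N" unfolding N_def using finV
      by (simp add: le_imp_less_Suc)
    define h where "h v = (if v = x then N else f v)" for v
    have himg: "h ` VH = insert N (f ` V)" unfolding h_def VH_def using assms(4)
      by (auto simp: image_iff)
    have cc_old: "color_class VH h k = color_class V f k" if k: "k \<in> f ` V" for k
    proof -
      have "k < N" using k fN by blast
      then have "N \<noteq> k" by simp
      have "\<forall>v\<in>V. h v = f v" unfolding h_def using assms(4) by auto
      then show ?thesis unfolding color_class_def VH_def using \<open>N \<noteq> k\<close>
        by (auto simp: h_def)
    qed
    have cc_new: "color_class VH h N = {x}"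
    proof -
      have "\<forall>v\<in>V. h v \<noteq> N" unfolding h_def using assms(4) fN by (metis less_irrefl)
      moreover have "h x = N" unfolding h_def by simp
      ultimately show ?thesis unfolding color_class_def VH_def by auto
    qed
    have fp: "proper_coloring V E f" and fd1: "\<forall>w\<in>V. \<exists>k\<in>f ` V. color_class V f k \<subseteq> closed_nbhd E w"
      and fd2: "\<forall>k\<in>f ` V. \<exists>w\<in>V. color_class V f k \<subseteq> closed_nbhd E w"
      using f(1) unfolding dom_coloring_def by auto
    have "dom_coloring VH EH h"
      unfolding dom_coloring_def proper_coloring_def
    proof (intro conjI ballI impI)
      fix u v assume a: "u \<in> VH" "v \<in> VH" "adj EH u v"
      show "h u \<noteq> h v"
      proof (cases "u = x")
        case True
        then have "v \<noteq> x" using a(3) noloopH by blast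
        then have "v \<in> V" using a(2) unfolding VH_def by simp
        then show ?thesis using True \<open>v \<noteq> x\<close> fN[of v] unfolding h_def by simp
      next
        case F1: False
        show ?thesis
        proof (cases "v = x")
          case True
          then have "u \<in> V" using a(1) F1 unfolding VH_def by simp
          then show ?thesis using True F1 fN[of u] unfolding h_def by simp
        next
          case False
          then have uv: "u \<in> V" "v \<in> V" using a F1 unfolding VH_def by auto
          have "\<not> (\<exists>w\<in>set c. {u,v} = {x,w})"
          proof
            assume "\<exists>w\<in>set c. {u,v} = {x,w}"
            then obtain w where "{u,v} = {x,w}" by blast
            then have "x = u \<or> x = v" by (metis insertI1 insert_iff singletonD)
            then show False using F1 False by blast
          qed
          then have "adj E u v" using a(3) adjH by blast
          then show ?thesis using fp uv F1 False unfolding proper_coloring_def h_def by auto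
        qed
      qed
    next
      fix w assume "w \<in> VH"
      show "\<exists>k\<in>h ` VH. color_class VH h k \<subseteq> closed_nbhd EH w"
      proof (cases "w = x")
        case True
        then show ?thesis using cc_new himg unfolding closed_nbhd_def by auto
      next
        case False
        then have "w \<in> V" using \<open>w \<in> VH\<close> VH_def by auto
        then obtain k where k: "k \<in> f ` V" "color_class V f k \<subseteq> closed_nbhd E w" using fd1 by blast
        have "color_class VH h k \<subseteq> closed_nbhd EH w" using cc_old[OF k(1)] k(2) nbE_H[of w] by simp
        moreover have "k \<in> h ` VH" using himg k(1) by simp
        ultimately show ?thesis by blast
      qed
    next
      fix k assume "k \<in> h ` VH"
      then have "k = N \<or> k \<in> f ` V" using himg by auto
      then show "\<exists>w\<in>VH. color_class VH h k \<subseteq> closed_nbhd EH w"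
      proof
        assume "k = N" then show ?thesis using cc_new unfolding VH_def closed_nbhd_def by auto
      next
        assume k: "k \<in> f ` V"
        then obtain w where "w \<in> V" "color_class V f k \<subseteq> closed_nbhd E w" using fd2 by blast
        then show ?thesis using cc_old[OF k] nbE_H unfolding VH_def by blast
      qed
    qed
    then have "chi_dd VH EH \<le> card (h ` VH)" by (rule chi_le)
    also have "\<dots> \<le> card (f ` V) + 1" unfolding himg using finV
      by (simp add: card_insert_le_m1 card_insert_if)
    finally show ?thesis using f(2) by simp
  qed
  have lower: "chi_dd V E \<le> chi_dd VH EH + length c"
  proof -
    obtain g where g: "dom_coloring VH EH g" "card (g ` VH) = chi_dd VH EH"
      using chi_ex[OF finVH noloopH] by blast
    have gp: "proper_coloring VH EH g" and gd1: "\<forall>w\<in>VH. \<exists>k\<in>g ` VH. color_class VH g k \<subseteq> closed_nbhd EH w"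
      and gd2: "\<forall>k\<in>g ` VH. \<exists>w\<in>VH. color_class VH g k \<subseteq> closed_nbhd EH w"
      using g(1) unfolding dom_coloring_def by auto
    define M where "M = Max (g ` VH)"
    have gM: "\<And>v. v \<in> VH \<Longrightarrow> g v \<le> M" unfolding M_def using finVH by simp
    obtain \<phi> :: "_ \<Rightarrow> nat" and n where phi: "\<phi> ` set c = {i. i < n}" "inj_on \<phi> (set c)"
      using finite_imp_inj_to_nat_seg[of "set c"] by blast
    define f where "f v = (if v \<in> set c then M + 1 + \<phi> v else g v)" for v
    have fimg: "f ` V \<subseteq> g ` VH \<union> (\<lambda>v. M + 1 + \<phi> v) ` set c"
      unfolding f_def VH_def by auto
    have cc_c: "\<And>w. w \<in> set c \<Longrightarrow> color_class V f (f w) = {w}"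
    proof -
      fix w assume w: "w \<in> set c"
      show "color_class V f (f w) = {w}"
      proof
        show "{w} \<subseteq> color_class V f (f w)" using w cV unfolding color_class_def by auto
        show "color_class V f (f w) \<subseteq> {w}"
        proof
          fix v assume "v \<in> color_class V f (f w)"
          then have v: "v \<in> V" "f v = f w" unfolding color_class_def by auto
          show "v \<in> {w}"
          proof (cases "v \<in> set c")
            case True
            then show ?thesis using v w phi(2) unfolding f_def inj_on_def by auto
          next
            case False
            then show ?thesis using v w gM[of v] unfolding f_def VH_def by auto
          qed
        qed
      qed
    qed
    have cc_o: "\<And>u. u \<in> V \<Longrightarrow> u \<notin> set c \<Longrightarrow> color_class V f (f u) \<subseteq> color_class VH g (g u)"
    proof
      fix u v assume u: "u \<in> V" "u \<notin> set c" and "v \<in> color_class V f (f u)"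
      then have v: "v \<in> V" "f v = f u" unfolding color_class_def by auto
      have "v \<notin> set c" using v u gM[of u] unfolding f_def VH_def by (auto split: if_splits)
      then show "v \<in> color_class VH g (g u)" using v u unfolding f_def color_class_def VH_def by auto
    qed
    have "dom_coloring V E f"
      unfolding dom_coloring_def proper_coloring_def
    proof (intro conjI ballI impI)
      fix u v assume a: "u \<in> V" "v \<in> V" "adj E u v"
      have uv: "u \<noteq> v" using a noloopE by auto
      have aH: "adj EH u v" using a adjH by auto
      show "f u \<noteq> f v"
      proof (cases "u \<in> set c"; cases "v \<in> set c")
        assume "u \<in> set c" "v \<in> set c" then show ?thesis using phi(2) uv unfolding f_def inj_on_def by auto
      next
        assume "u \<in> set c" "v \<notin> set c" then show ?thesis using gM[of v] a unfolding f_def VH_def by auto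
      next
        assume "u \<notin> set c" "v \<in> set c" then show ?thesis using gM[of u] a unfolding f_def VH_def by auto
      next
        assume "u \<notin> set c" "v \<notin> set c" then show ?thesis using gp a aH unfolding f_def VH_def proper_coloring_def by auto
      qed
    next
      fix w assume w: "w \<in> V"
      show "\<exists>k\<in>f ` V. color_class V f k \<subseteq> closed_nbhd E w"
      proof (cases "w \<in> set c")
        case True
        then show ?thesis using cc_c[of w] w unfolding closed_nbhd_def by blast
      next
        case False
        obtain k where k: "k \<in> g ` VH" "color_class VH g k \<subseteq> closed_nbhd EH w"
          using gd1 w unfolding VH_def by blast
        have xK: "x \<notin> color_class VH g k" using k(2) xnb[OF w False] by blast
        obtain u0 where u0: "u0 \<in> VH" "k = g u0" using k(1) by blast
        have u0V: "u0 \<in> V" using u0 xK unfolding color_class_def VH_def by auto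
        have u0K: "u0 \<in> color_class VH g k" using u0 unfolding color_class_def by auto
        show ?thesis
        proof (cases "\<exists>u\<in>color_class VH g k. u \<notin> set c")
          case True
          then obtain u where u: "u \<in> color_class VH g k" "u \<notin> set c" by blast
          have uV: "u \<in> V" using u xK unfolding color_class_def VH_def by auto
          have gu: "g u = k" using u unfolding color_class_def by auto
          have "color_class V f (f u) \<subseteq> closed_nbhd E w"
          proof
            fix v assume v: "v \<in> color_class V f (f u)"
            then have "v \<in> V" unfolding color_class_def by auto
            moreover have "v \<in> closed_nbhd EH w" using cc_o[OF uV u(2)] v gu k(2) by blast
            ultimately show "v \<in> closed_nbhd E w" using nbH_E w by blast
          qed
          then show ?thesis using uV by blast
        next
          case False
          then have "u0 \<in> set c" using u0K by blast
          moreover have "u0 \<in> closed_nbhd E w" using nbH_E[OF w u0V] u0K k(2) by blast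
          ultimately have "color_class V f (f u0) \<subseteq> closed_nbhd E w" using cc_c[of u0] by simp
          then show ?thesis using u0V by blast
        qed
      qed
    next
      fix k assume "k \<in> f ` V"
      then obtain u where u: "u \<in> V" "k = f u" by blast
      show "\<exists>w\<in>V. color_class V f k \<subseteq> closed_nbhd E w"
      proof (cases "u \<in> set c")
        case True
        then show ?thesis using cc_c[of u] u unfolding closed_nbhd_def by blast
      next
        case False
        obtain w where w: "w \<in> VH" "color_class VH g (g u) \<subseteq> closed_nbhd EH w"
          using gd2 u unfolding VH_def by blast
        have uK: "u \<in> color_class VH g (g u)" using u unfolding color_class_def VH_def by auto
        have "w \<noteq> x"
        proof
          assume "w = x"
          then have "u \<in> insert x (set c)" using uK w nbx by blast
          then show False using u False assms(4) by auto
        qed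
        then have wV: "w \<in> V" using w unfolding VH_def by auto
        have "color_class V f k \<subseteq> closed_nbhd E w"
        proof
          fix v assume v: "v \<in> color_class V f k"
          then have "v \<in> V" unfolding color_class_def by auto
          moreover have "v \<in> closed_nbhd EH w" using cc_o[OF u(1) False] v u(2) w(2) by blast
          ultimately show "v \<in> closed_nbhd E w" using nbH_E wV by blast
        qed
        then show ?thesis using wV by blast
      qed
    qed
    then have "chi_dd V E \<le> card (f ` V)" by (rule chi_le)
    also have "\<dots> \<le> card (g ` VH \<union> (\<lambda>v. M + 1 + \<phi> v) ` set c)"
      using fimg finVH by (intro card_mono) auto
    also have "\<dots> \<le> card (g ` VH) + card ((\<lambda>v. M + 1 + \<phi> v) ` set c)" by (rule card_Un_le)
    also have "card ((\<lambda>v. M + 1 + \<phi> v) ` set c) \<le> card (set c)" by (rule card_image_le) simp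
    also have "card (set c) \<le> length c" by (rule card_length)
    finally show ?thesis using g(2) by simp
  qed
  show ?thesis using upper lower unfolding VHd EH_def[symmetric] by linarith
qed

end
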